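(* Let $n\ge1$ and let $X,Y\in\widetilde{Sp}(\mathbb{R}^n\times\mathbb{R}^n)$ with $X\neq Y$. Then there exists $f\in A_{fin}[\widetilde{Sp}(\mathbb{A}^1_n)]$ with $\varphi_X(f)\neq\varphi_Y(f)$.
   Context: A pair $(\mathbf z,\mathbf z')\in\mathbb{R}^n\times\mathbb{R}^n$ is degenerate if $z_j=z'_j$ for some $j$. $\widetilde{Sp}(\mathbb{R}^n\times\mathbb{R}^n)$ is the set of finite multisets of points of $\mathbb{R}^n\times\mathbb{R}^n$ modulo the equivalence relation generated by adding or removing degenerate pairs. For $m\ge1$ let $P_m=\mathbb{R}[x_{ij},y_{ij}]_{1\le i\le m,\,1\le j\le n}$ graded by total degree; $S_m$ permutes the block index $i$ simultaneously in $x$ and $y$; $A_m=P_m^{S_m}$; $\pi_m:A_{m+1}\to A_m$ sets $x_{m+1,j}=y_{m+1,j}=0$; $A^\infty_{fin}=\varprojlim_m A_m$ in graded rings (finite sums of compatible families of homogeneous elements of a common degree). For a finite multiset $X=\{(\mathbf{x}_1,\mathbf{y}_1),\dots,(\mathbf{x}_r,\mathbf{y}_r)\}$ and $f\in A^\infty_{fin}$, $\varphi_X(f)=f_m(\mathbf{x}_1,\mathbf{y}_1,\dots,\mathbf{x}_r,\mathbf{y}_r,0,\dots,0)$ for any $m\ge r$. $A_{fin}[\widetilde{Sp}(\mathbb{A}^1_n)]$ is the set of $f\in A^\infty_{fin}$ with $\varphi_{X\cup\{(\mathbf z,\mathbf z')\}}(f)=\varphi_X(f)$ for all finite multisets $X$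 and degenerate pairs $(\mathbf z,\mathbf z')$; for such $f$, $\varphi_X(f)$ is well defined for $X\in\widetilde{Sp}(\mathbb{R}^n\times\mathbb{R}^n)$. *)

theory Defs
  imports "HOL-Analysis.Analysis" "HOL-Library.Multiset" "HOL-Combinatorics.Permutations"
begin

text \<open>Points of R^n x R^n; the dimension n is the cardinality of the finite index type 'n.
  A configuration assigns to each block index i a point (x_i, y_i); an element of P_m is
  represented by the polynomial function it induces on configurations (only blocks i < m,
  i.e. the paper's blocks 1..m, are used).\<close>

type_synonym 'n pt = "(real^'n) \<times> (real^'n)"
type_synonym 'n conf = "nat \<Rightarrow> 'n pt"

text \<open>F is (the function of) a homogeneous polynomial of total degree d in the variables
  x_{ij} = fst (z i) $ j, y_{ij} = snd (z i) $ j, i < m.\<close>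
definition hom_poly :: "nat \<Rightarrow> nat \<Rightarrow> ('n::finite conf \<Rightarrow> real) \<Rightarrow> bool" where
  "hom_poly m d F \<longleftrightarrow>
     (\<exists>(M :: ((nat \<Rightarrow> 'n \<Rightarrow> nat) \<times> (nat \<Rightarrow> 'n \<Rightarrow> nat)) set) c.
        finite M \<and>
        (\<forall>(\<alpha>, \<beta>)\<in>M. (\<forall>i j. m \<le> i \<longrightarrow> \<alpha> i j = 0 \<and> \<beta> i j = 0) \<and>
                       (\<Sum>i<m. \<Sum>j\<in>UNIV. \<alpha> i j + \<beta> i j) = d) \<and>
        F = (\<lambda>z. \<Sum>(\<alpha>, \<beta>)\<in>M. c (\<alpha>, \<beta>) *
               (\<Prod>i<m. \<Prod>j\<in>UNIV. (fst (z i) $ j) ^ (\<alpha> i j) * (snd (z i) $ j) ^ (\<beta> i j))))"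

definition sym_m :: "nat \<Rightarrow> ('n::finite conf \<Rightarrow> real) \<Rightarrow> bool" where
  "sym_m m F \<longleftrightarrow> (\<forall>\<sigma> z. \<sigma> permutes {..<m} \<longrightarrow> F (z \<circ> \<sigma>) = F z)"

text \<open>A compatible family (g_m)_{m>=1} of homogeneous elements of A_m of common degree d:
  pi_m (g_{m+1}) = g_m, where pi_m sets the (m+1)-st block (index m) to 0.\<close>
definition hom_family :: "nat \<Rightarrow> (nat \<Rightarrow> 'n::finite conf \<Rightarrow> real) \<Rightarrow> bool" where
  "hom_family d g \<longleftrightarrow>
     (\<forall>m\<ge>1. hom_poly m d (g m) \<and> sym_m m (g m)) \<and>
     (\<forall>m\<ge>1. \<forall>z. g m z = g (Suc m) (z(m := (0, 0))))"

definition A_inf_fin :: "(nat \<Rightarrow> 'n::finite conf \<Rightarrow> real) set" where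
  "A_inf_fin = {f. \<exists>k (ds :: nat \<Rightarrow> nat) gs.
       (\<forall>l<k. hom_family (ds l) (gs l)) \<and>
       (\<forall>m\<ge>1. \<forall>z. f m z = (\<Sum>l<k. gs l m z))}"

definition conf_of_list :: "'n::finite pt list \<Rightarrow> 'n conf" where
  "conf_of_list xs i = (if i < length xs then xs ! i else (0, 0))"

text \<open>phi_X(f) = f_m(x_1,y_1,...,x_r,y_r,0,...,0) with m = max 1 r (any m >= r gives the
  same value for f in A^infty_fin).\<close>
definition phi :: "'n::finite pt multiset \<Rightarrow> (nat \<Rightarrow> 'n conf \<Rightarrow> real) \<Rightarrow> real" where
  "phi X f = f (max 1 (size X)) (conf_of_list (SOME xs. mset xs = X))"

definition degenerate :: "'n::finite pt \<Rightarrow> bool" where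
  "degenerate p \<longleftrightarrow> (\<exists>j. fst p $ j = snd p $ j)"

definition A_fin_Sp :: "(nat \<Rightarrow> 'n::finite conf \<Rightarrow> real) set" where
  "A_fin_Sp = {f \<in> A_inf_fin. \<forall>X p. degenerate p \<longrightarrow> phi (add_mset p X) f = phi X f}"

text \<open>One step: adding a degenerate pair. Sp~ is the quotient by the equivalence relation
  generated by this (equivclp = reflexive-symmetric-transitive closure).\<close>
definition sp_step :: "'n::finite pt multiset \<Rightarrow> 'n pt multiset \<Rightarrow> bool" where
  "sp_step X Y \<longleftrightarrow> (\<exists>p. degenerate p \<and> Y = add_mset p X)"

definition sp_equiv :: "'n::finite pt multiset \<Rightarrow> 'n pt multiset \<Rightarrow> bool" where
  "sp_equiv = equivclp sp_step"

end

theory Submission imports Defs begin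

definition mn :: "nat \<Rightarrow> (nat \<Rightarrow> 'n \<Rightarrow> nat) \<times> (nat \<Rightarrow> 'n \<Rightarrow> nat) \<Rightarrow> 'n::finite conf \<Rightarrow> real" where
  "mn m w z = (\<Prod>i<m. \<Prod>j\<in>UNIV. (fst (z i) $ j) ^ (fst w i j) * (snd (z i) $ j) ^ (snd w i j))"

definition okm :: "nat \<Rightarrow> nat \<Rightarrow> (nat \<Rightarrow> 'n::finite \<Rightarrow> nat) \<times> (nat \<Rightarrow> 'n \<Rightarrow> nat) \<Rightarrow> bool" where
  "okm m d w \<longleftrightarrow> (\<forall>i j. m \<le> i \<longrightarrow> fst w i j = 0 \<and> snd w i j = 0) \<and>
                       (\<Sum>i<m. \<Sum>j\<in>UNIV. fst w i j + snd w i j) = d"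

lemma hp_alt: "hom_poly m d (F::'n::finite conf \<Rightarrow> real) \<longleftrightarrow>
   (\<exists>M c. finite M \<and> (\<forall>w\<in>M. okm m d w) \<and> F = (\<lambda>z. \<Sum>w\<in>M. c w * mn m w z))"
  unfolding hom_poly_def okm_def mn_def by (simp add: split_def case_prod_beta)

lemma hp_zero: "hom_poly m d (\<lambda>z::'n::finite conf. 0)"
  unfolding hp_alt by (rule exI[of _ "{}"]) auto

lemma hp_add:
  assumes "hom_poly m d (F::'n::finite conf \<Rightarrow> real)" "hom_poly m d G"
  shows "hom_poly m d (\<lambda>z. F z + G z)"
proof -
  from assms(1) obtain M1 c1 where 1: "finite M1" "\<forall>w\<in>M1. okm m d w" "F = (\<lambda>z. \<Sum>w\<in>M1. c1 w * mn m w z)"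
    unfolding hp_alt by blast
  from assms(2) obtain M2 c2 where 2: "finite M2" "\<forall>w\<in>M2. okm m d w" "G = (\<lambda>z. \<Sum>w\<in>M2. c2 w * mn m w z)"
    unfolding hp_alt by blast
  define c where "c w = (if w \<in> M1 then c1 w else 0) + (if w \<in> M2 then c2 w else 0)" for w
  have "(\<lambda>z. F z + G z) = (\<lambda>z. \<Sum>w\<in>M1 \<union> M2. c w * mn m w z)"
  proof
    fix z
    have "(\<Sum>w\<in>M1 \<union> M2. c w * mn m w z) = (\<Sum>w\<in>M1 \<union> M2. (if w \<in> M1 then c1 w * mn m w z else 0))
       + (\<Sum>w\<in>M1 \<union> M2. (if w \<in> M2 then c2 w * mn m w z else 0))"
      unfolding sum.distrib[symmetric] by (rule sum.cong) (auto simp: c_def distrib_right)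
    also have "\<dots> = F z + G z"
      using 1 2 by (simp add: sum.If_cases Int_absorb1 Int_absorb2)
    finally show "F z + G z = (\<Sum>w\<in>M1 \<union> M2. c w * mn m w z)" by simp
  qed
  then show ?thesis unfolding hp_alt using 1 2 by (intro exI[of _ "M1 \<union> M2"] exI[of _ c]) auto
qed

lemma hp_scale:
  assumes "hom_poly m d (F::'n::finite conf \<Rightarrow> real)"
  shows "hom_poly m d (\<lambda>z. a * F z)"
proof -
  from assms obtain M c where 1: "finite M" "\<forall>w\<in>M. okm m d w" "F = (\<lambda>z. \<Sum>w\<in>M. c w * mn m w z)"
    unfolding hp_alt by blast
  then show ?thesis unfolding hp_alt
    by (intro exI[of _ M] exI[of _ "\<lambda>w. a * c w"]) (auto simp: sum_distrib_left mult.assoc)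
qed

lemma hp_one: "hom_poly m 0 (\<lambda>z::'n::finite conf. 1)"
  unfolding hp_alt
  by (intro exI[of _ "{(\<lambda>i j. 0, \<lambda>i j. 0)}"] exI[of _ "\<lambda>w. 1"]) (auto simp: okm_def mn_def)

definition padd :: "(nat \<Rightarrow> 'n \<Rightarrow> nat) \<times> (nat \<Rightarrow> 'n \<Rightarrow> nat) \<Rightarrow> (nat \<Rightarrow> 'n \<Rightarrow> nat) \<times> (nat \<Rightarrow> 'n \<Rightarrow> nat) \<Rightarrow> (nat \<Rightarrow> 'n \<Rightarrow> nat) \<times> (nat \<Rightarrow> 'n \<Rightarrow> nat)" where
  "padd u v = (\<lambda>i j. fst u i j + fst v i j, \<lambda>i j. snd u i j + snd v i j)"

lemma mn_padd: "mn m (padd u v) z = mn m u z * mn m v z"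
  unfolding mn_def padd_def by (simp add: power_add prod.distrib[symmetric] mult_ac)

lemma okm_padd: "okm m d1 u \<Longrightarrow> okm m d2 v \<Longrightarrow> okm m (d1 + d2) (padd (u::(nat \<Rightarrow> 'n::finite \<Rightarrow> nat) \<times> _) v)"
  unfolding okm_def padd_def by (simp add: sum.distrib)

lemma hp_mult:
  assumes "hom_poly m d1 (F::'n::finite conf \<Rightarrow> real)" "hom_poly m d2 G"
  shows "hom_poly m (d1 + d2) (\<lambda>z. F z * G z)"
proof -
  from assms(1) obtain M1 c1 where 1: "finite M1" "\<forall>w\<in>M1. okm m d1 w" "F = (\<lambda>z. \<Sum>w\<in>M1. c1 w * mn m w z)"
    unfolding hp_alt by blast
  from assms(2) obtain M2 c2 where 2: "finite M2" "\<forall>w\<in>M2. okm m d2 w" "G = (\<lambda>z. \<Sum>w\<in>M2. c2 w * mn m w z)"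
    unfolding hp_alt by blast
  define g where "g = (\<lambda>x::((nat \<Rightarrow> 'n \<Rightarrow> nat) \<times> (nat \<Rightarrow> 'n \<Rightarrow> nat)) \<times> ((nat \<Rightarrow> 'n \<Rightarrow> nat) \<times> (nat \<Rightarrow> 'n \<Rightarrow> nat)). padd (fst x) (snd x))"
  define M where "M = g ` (M1 \<times> M2)"
  define c where "c w = (\<Sum>x\<in>{x\<in>M1 \<times> M2. g x = w}. c1 (fst x) * c2 (snd x))" for w
  have fin: "finite M" unfolding M_def using 1 2 by auto
  have ok: "\<forall>w\<in>M. okm m (d1 + d2) w" unfolding M_def g_def using 1 2 by (auto intro: okm_padd)
  have "(\<lambda>z. F z * G z) = (\<lambda>z. \<Sum>w\<in>M. c w * mn m w z)"
  proof
    fix z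
    have "F z * G z = (\<Sum>x\<in>M1 \<times> M2. c1 (fst x) * c2 (snd x) * mn m (g x) z)"
      unfolding 1(3) 2(3) sum_product sum.cartesian_product g_def
      by (rule sum.cong) (auto simp: mn_padd mult_ac)
    also have "\<dots> = (\<Sum>w\<in>M. \<Sum>x\<in>{x\<in>M1 \<times> M2. g x = w}. c1 (fst x) * c2 (snd x) * mn m (g x) z)"
      by (rule sum.group[symmetric]) (use 1 2 fin in \<open>auto simp: M_def\<close>)
    also have "\<dots> = (\<Sum>w\<in>M. c w * mn m w z)"
      unfolding c_def sum_distrib_right by (rule sum.cong; auto)
    finally show "F z * G z = (\<Sum>w\<in>M. c w * mn m w z)" .
  qed
  then show ?thesis unfolding hp_alt using fin ok by blast
qed

lemma if_conj_split: "(if a \<and> b then x else y) = (if a then (if b then x else y) else y)" by simp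

lemma delta2: "i < (m::nat) \<Longrightarrow> (\<Sum>ia<m. \<Sum>ja\<in>(UNIV::'n::finite set). if ia = i \<and> ja = j then (1::nat) else 0) = 1"
proof -
  assume "i < m"
  have "(\<Sum>ia<m. \<Sum>ja\<in>(UNIV::'n set). if ia = i \<and> ja = j then (1::nat) else 0) = (\<Sum>ia<m. if ia = i then (1::nat) else 0)"
    by (rule sum.cong) (auto simp: if_conj_split sum.delta)
  also have "\<dots> = 1" using \<open>i < m\<close> by simp
  finally show ?thesis .
qed

lemma pdelta2: "i < (m::nat) \<Longrightarrow> (\<Prod>ia<m. \<Prod>ja\<in>(UNIV::'n::finite set). if ia = i \<and> ja = j then (x::real) else 1) = x"
proof -
  assume "i < m"
  have "(\<Prod>ia<m. \<Prod>ja\<in>(UNIV::'n set). if ia = i \<and> ja = j then x else 1) = (\<Prod>ia<m. if ia = i then x else 1)"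
    by (rule prod.cong) (auto simp: if_conj_split prod.delta)
  also have "\<dots> = x" using \<open>i < m\<close> by simp
  finally show ?thesis .
qed

lemma hp_fst:
  assumes "i < m"
  shows "hom_poly m 1 (\<lambda>z::'n::finite conf. fst (z i) $ j)"
  unfolding hp_alt
proof (intro exI[of _ "{(\<lambda>k l. if k = i \<and> l = j then 1 else 0, \<lambda>k l. 0)}"] exI[of _ "\<lambda>w. 1"] conjI)
  show "\<forall>w\<in>{(\<lambda>k l. if k = i \<and> l = j then 1 else 0, \<lambda>k l. 0)}. okm m 1 w"
    using assms by (simp add: okm_def delta2)
  have "mn m (\<lambda>k l. if k = i \<and> l = j then 1 else 0, \<lambda>k l. 0) z = (\<Prod>ia<m. \<Prod>ja\<in>UNIV. if ia = i \<and> ja = j then fst (z i) $ j else 1)" for z :: "'n conf"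
    unfolding mn_def by (intro prod.cong refl) auto
  then show "(\<lambda>z::'n conf. fst (z i) $ j) = (\<lambda>z. \<Sum>w\<in>{(\<lambda>k l. if k = i \<and> l = j then 1 else 0, \<lambda>k l. 0)}. 1 * mn m w z)"
    using assms by (simp add: pdelta2)
qed simp

lemma hp_snd:
  assumes "i < m"
  shows "hom_poly m 1 (\<lambda>z::'n::finite conf. snd (z i) $ j)"
  unfolding hp_alt
proof (intro exI[of _ "{(\<lambda>k l. 0, \<lambda>k l. if k = i \<and> l = j then 1 else 0)}"] exI[of _ "\<lambda>w. 1"] conjI)
  show "\<forall>w\<in>{(\<lambda>k l. 0, \<lambda>k l. if k = i \<and> l = j then 1 else 0)}. okm m 1 w"
    using assms by (simp add: okm_def delta2)
  have "mn m (\<lambda>k l. 0, \<lambda>k l. if k = i \<and> l = j then 1 else 0) z = (\<Prod>ia<m. \<Prod>ja\<in>UNIV. if ia = i \<and> ja = j then snd (z i) $ j else 1)" for z :: "'n conf"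
    unfolding mn_def by (intro prod.cong refl) auto
  then show "(\<lambda>z::'n conf. snd (z i) $ j) = (\<lambda>z. \<Sum>w\<in>{(\<lambda>k l. 0, \<lambda>k l. if k = i \<and> l = j then 1 else 0)}. 1 * mn m w z)"
    using assms by (simp add: pdelta2)
qed simp

lemma hp_sum:
  assumes "finite A" "\<And>a. a \<in> A \<Longrightarrow> hom_poly m d (F a :: 'n::finite conf \<Rightarrow> real)"
  shows "hom_poly m d (\<lambda>z. \<Sum>a\<in>A. F a z)"
  using assms by (induction A rule: finite_induct) (auto intro: hp_add hp_zero)

lemma hp_prod:
  assumes "finite A" "\<And>a. a \<in> A \<Longrightarrow> hom_poly m (d a) (F a :: 'n::finite conf \<Rightarrow> real)"
  shows "hom_poly m (\<Sum>a\<in>A. d a) (\<lambda>z. \<Prod>a\<in>A. F a z)"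
  using assms by (induction A rule: finite_induct) (auto intro: hp_mult hp_one)

lemma fam:
  assumes hp: "\<And>m i. i < m \<Longrightarrow> hom_poly m d (\<lambda>z::'n::finite conf. h (z i))"
    and h0: "h (0, 0) = 0"
  shows "hom_family d (\<lambda>m z. \<Sum>i<m. h (z i))"
  unfolding hom_family_def
proof (intro conjI allI impI)
  fix m :: nat
  show "hom_poly m d (\<lambda>z. \<Sum>i<m. h (z i))" by (rule hp_sum) (auto intro: hp)
  show "sym_m m (\<lambda>z. \<Sum>i<m. h (z i))" unfolding sym_m_def
  proof (intro allI impI)
    fix \<sigma> and z :: "'n conf" assume "\<sigma> permutes {..<m}"
    then have "bij_betw \<sigma> {..<m} {..<m}" by (rule permutes_imp_bij)
    then show "(\<Sum>i<m. h ((z \<circ> \<sigma>) i)) = (\<Sum>i<m. h (z i))"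
      using sum.reindex_bij_betw[of \<sigma> "{..<m}" "{..<m}" "\<lambda>i. h (z i)"] by simp
  qed
  fix z :: "'n conf"
  show "(\<Sum>i<m. h (z i)) = (\<Sum>i<Suc m. h ((z(m := (0, 0))) i))"
    using h0 by simp
qed

definition fsum :: "('n::finite pt \<Rightarrow> real) \<Rightarrow> nat \<Rightarrow> 'n conf \<Rightarrow> real" where
  "fsum Q m z = (\<Sum>i<m. Q (z i))"

lemma phi_fsum:
  assumes "Q (0, 0) = 0"
  shows "phi X (fsum Q) = sum_mset (image_mset Q X)"
proof -
  define xs where "xs = (SOME xs. mset xs = X)"
  have xs: "mset xs = X" unfolding xs_def by (rule someI_ex) (rule ex_mset)
  define m where "m = max 1 (size X)"
  have len: "length xs \<le> m" unfolding m_def using xs by (metis max.cobounded2 size_mset)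
  have "phi X (fsum Q) = (\<Sum>i<m. Q (conf_of_list xs i))"
    unfolding phi_def fsum_def m_def xs_def ..
  also have "\<dots> = (\<Sum>i<length xs. Q (conf_of_list xs i))"
    by (rule sum.mono_neutral_right) (use len assms in \<open>auto simp: conf_of_list_def\<close>)
  also have "\<dots> = (\<Sum>i<length xs. Q (xs ! i))"
    by (rule sum.cong) (auto simp: conf_of_list_def)
  also have "\<dots> = sum_list (map Q xs)"
    by (simp add: sum_list_sum_nth atLeast0LessThan)
  also have "\<dots> = sum_mset (image_mset Q X)"
    by (simp flip: xs sum_mset_sum_list)
  finally show ?thesis .
qed

lemma in_A_fin_Sp:
  fixes h :: "'t \<Rightarrow> 'n::finite pt \<Rightarrow> real"
  assumes T: "finite T"
    and hp: "\<And>t m i. t \<in> T \<Longrightarrow> i < m \<Longrightarrow> hom_poly m (d t) (\<lambda>z::'n conf. h t (z i))"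
    and h0: "\<And>t. t \<in> T \<Longrightarrow> h t (0, 0) = 0"
    and Qdeg: "\<And>p. degenerate p \<Longrightarrow> (\<Sum>t\<in>T. h t p) = 0"
  shows "fsum (\<lambda>p. \<Sum>t\<in>T. h t p) \<in> A_fin_Sp"
proof -
  let ?Q = "\<lambda>p. \<Sum>t\<in>T. h t p"
  obtain ts where ts: "set ts = T" "distinct ts" using finite_distinct_list[OF T] by blast
  have "fsum ?Q \<in> A_inf_fin"
    unfolding A_inf_fin_def
  proof (intro CollectI exI[of _ "length ts"] exI[of _ "\<lambda>l. d (ts ! l)"] exI[of _ "\<lambda>l m z. \<Sum>i<m. h (ts ! l) (z i)"] conjI allI impI)
    show "hom_family (d (ts ! l)) (\<lambda>m z. \<Sum>i<m. h (ts ! l) (z i))" if "l < length ts" for l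
      using ts that by (auto intro!: fam hp h0)
    fix m :: nat and z :: "'n conf"
    have "fsum ?Q m z = (\<Sum>t\<in>T. \<Sum>i<m. h t (z i))"
      unfolding fsum_def by (rule sum.swap)
    also have "\<dots> = (\<Sum>l<length ts. \<Sum>i<m. h (ts ! l) (z i))"
      using sum.reindex_bij_betw[OF bij_betw_nth[OF ts(2) refl ts(1)[symmetric]], of "\<lambda>t. \<Sum>i<m. h t (z i)"]
      by simp
    finally show "fsum ?Q m z = (\<Sum>l<length ts. \<Sum>i<m. h (ts ! l) (z i))" .
  qed
  moreover have Q0: "?Q (0, 0) = 0" using h0 by simp
  moreover have "phi (add_mset p X) (fsum ?Q) = phi X (fsum ?Q)" if "degenerate p" for p X
    unfolding phi_fsum[of ?Q, OF Q0] using Qdeg[OF that] by simp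
  ultimately show ?thesis
    unfolding A_fin_Sp_def by blast
qed

definition coord :: "bool \<times> 'n \<Rightarrow> 'n::finite pt \<Rightarrow> real" where
  "coord k p = (if fst k then fst p $ snd k else snd p $ snd k)"

lemma hp_coord: "i < m \<Longrightarrow> hom_poly m 1 (\<lambda>z::'n::finite conf. coord k (z i))"
  using hp_fst[of i m "snd k"] hp_snd[of i m "snd k"] by (cases "fst k") (simp_all add: coord_def)

definition Dfun :: "'n::finite pt \<Rightarrow> real" where
  "Dfun p = (\<Prod>j\<in>UNIV. fst p $ j - snd p $ j)"

lemma hp_D: "i < m \<Longrightarrow> hom_poly m CARD('n) (\<lambda>z::'n::finite conf. Dfun (z i))"
proof -
  assume i: "i < m"
  have "hom_poly m 1 (\<lambda>z::'n conf. fst (z i) $ j + (-1) * snd (z i) $ j)" for j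
    by (rule hp_add[OF hp_fst[OF i] hp_scale[OF hp_snd[OF i]]])
  then have "hom_poly m 1 (\<lambda>z::'n conf. fst (z i) $ j - snd (z i) $ j)" for j by simp
  then have "hom_poly m (\<Sum>j\<in>(UNIV::'n set). 1) (\<lambda>z::'n conf. \<Prod>j\<in>UNIV. fst (z i) $ j - snd (z i) $ j)"
    by (intro hp_prod) auto
  then show ?thesis by (simp add: Dfun_def)
qed

lemma Dfun_deg: "degenerate p \<Longrightarrow> Dfun p = 0"
  unfolding degenerate_def Dfun_def by (auto simp: prod_zero_iff)

lemma Dfun_nondeg: "\<not> degenerate p \<Longrightarrow> Dfun p \<noteq> 0"
  unfolding degenerate_def Dfun_def by (auto simp: prod_zero_iff)

lemma sum_mset_single:
  assumes "\<forall>p\<in>#M. p \<noteq> a \<longrightarrow> q p = (0::real)"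
  shows "sum_mset (image_mset q M) = of_nat (count M a) * q a"
  using assms
proof (induction M)
  case empty then show ?case by simp
next
  case (add x M)
  then have IH: "sum_mset (image_mset q M) = of_nat (count M a) * q a" by simp
  show ?case
  proof (cases "x = a")
    case True
    then show ?thesis using IH by (simp add: distrib_right)
  next
    case False
    then have "q x = 0" using add.prems by simp
    then show ?thesis using IH False by simp
  qed
qed

lemma sp_equiv_add_deg:
  assumes "\<forall>p\<in>#N. degenerate p"
  shows "sp_equiv (X + N) X"
  using assms
proof (induction N)
  case empty then show ?case by (simp add: sp_equiv_def)
next
  case (add p N)
  then have "sp_equiv (X + N) X" by simp
  moreover have "degenerate p" using add.prems by simp
  then have "sp_step (X + N) (add_mset p (X + N))"
    unfolding sp_step_def by (intro exI[of _ p] conjI refl)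
  then have "equivclp sp_step (add_mset p (X + N)) (X + N)"
    by (rule equivclp_sym[OF r_into_equivclp])
  ultimately have "sp_equiv (add_mset p (X + N)) X"
    unfolding sp_equiv_def by (meson equivclp_trans)
  then show ?case by simp
qed

lemma sp_equiv_filter: "sp_equiv X (filter_mset (\<lambda>p. \<not> degenerate p) X)"
proof -
  have H: "sp_equiv (filter_mset (\<lambda>p. \<not> degenerate p) X + filter_mset degenerate X) (filter_mset (\<lambda>p. \<not> degenerate p) X)"
    by (rule sp_equiv_add_deg) auto
  have e: "X = filter_mset degenerate X + filter_mset (\<lambda>p. \<not> degenerate p) X" by (rule multiset_partition)
  have e2: "filter_mset (\<lambda>p. \<not> degenerate p) X + filter_mset degenerate X = X"
    using e[symmetric] by (simp only: add.commute)
  show ?thesis using H unfolding e2 .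
qed

theorem lemma4p6:
  fixes X Y :: "'n::finite pt multiset"
  assumes "\<not> sp_equiv X Y"
  shows "\<exists>f \<in> A_fin_Sp. phi X f \<noteq> phi Y f"
proof -
  define X' where "X' = filter_mset (\<lambda>p. \<not> degenerate p) X"
  define Y' where "Y' = filter_mset (\<lambda>p. \<not> degenerate p) Y"
  have "X' \<noteq> Y'"
  proof
    assume "X' = Y'"
    moreover have "sp_equiv X X'" "sp_equiv Y Y'" unfolding X'_def Y'_def by (rule sp_equiv_filter)+
    ultimately have "sp_equiv X Y" unfolding sp_equiv_def
      using equivclp_trans[of sp_step X Y' Y] equivclp_sym[of sp_step Y Y'] by simp
    with assms show False by simp
  qed
  then obtain a where cnt: "count X' a \<noteq> count Y' a" by (meson multiset_eqI)
  then have nd: "\<not> degenerate a" unfolding X'_def Y'_def by auto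
  then have cX: "count X' a = count X a" and cY: "count Y' a = count Y a"
    unfolding X'_def Y'_def by auto
  define B where "B = (set_mset X' \<union> set_mset Y') - {a}"
  have finB: "finite B" unfolding B_def by simp
  have exk: "\<exists>k. coord k a \<noteq> coord k b" if "b \<noteq> a" for b
  proof (cases "fst a = fst b")
    case False
    then obtain j where "fst a $ j \<noteq> fst b $ j" by (auto simp: vec_eq_iff)
    then show ?thesis by (intro exI[of _ "(True, j)"]) (simp add: coord_def)
  next
    case True
    then have "snd a \<noteq> snd b" using that by (auto simp: prod_eq_iff)
    then obtain j where "snd a $ j \<noteq> snd b $ j" by (auto simp: vec_eq_iff)
    then show ?thesis by (intro exI[of _ "(False, j)"]) (simp add: coord_def)
  qed
  have ex: "\<exists>k. b \<noteq> a \<longrightarrow> coord k a \<noteq> coord k b" for b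
  proof (cases "b = a")
    case True then show ?thesis by blast
  next
    case False
    then show ?thesis using exk[OF False] by blast
  qed
  obtain \<kappa> where \<kappa>: "\<And>b. b \<noteq> a \<Longrightarrow> coord (\<kappa> b) a \<noteq> coord (\<kappa> b) b"
  proof -
    have "\<forall>b. \<exists>k. b \<noteq> a \<longrightarrow> coord k a \<noteq> coord k b" using ex by blast
    from choice[OF this] obtain f where "\<forall>b. b \<noteq> a \<longrightarrow> coord (f b) a \<noteq> coord (f b) b" by blast
    then show ?thesis using that by blast
  qed
  define h where "h S p = (\<Prod>b\<in>B-S. - coord (\<kappa> b) b) * (Dfun p * (\<Prod>b\<in>S. coord (\<kappa> b) p))" for S p
  define q where "q p = Dfun p * (\<Prod>b\<in>B. coord (\<kappa> b) p + - coord (\<kappa> b) b)" for p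
  have hq: "(\<Sum>S\<in>Pow B. h S p) = q p" for p
    unfolding q_def h_def prod_add[OF finB] sum_distrib_left by (rule sum.cong) (auto simp: mult_ac)
  have hp: "hom_poly m (CARD('n) + card S) (\<lambda>z::'n conf. h S (z i))" if "S \<in> Pow B" "i < m" for S m i
  proof -
    have fS: "finite S" using that finB finite_subset by auto
    have "hom_poly m (\<Sum>b\<in>S. 1) (\<lambda>z::'n conf. \<Prod>b\<in>S. coord (\<kappa> b) (z i))"
      by (rule hp_prod[OF fS]) (rule hp_coord[OF that(2)])
    then have "hom_poly m (CARD('n) + card S) (\<lambda>z::'n conf. Dfun (z i) * (\<Prod>b\<in>S. coord (\<kappa> b) (z i)))"
      using hp_mult[OF hp_D[OF that(2)]] by simp
    then show ?thesis unfolding h_def by (rule hp_scale)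
  qed
  have h0: "h S (0, 0) = 0" for S
    unfolding h_def using Dfun_deg[of "(0,0)::'n pt"] by (simp add: degenerate_def)
  have fin: "fsum (\<lambda>p. \<Sum>S\<in>Pow B. h S p) \<in> A_fin_Sp"
  proof (rule in_A_fin_Sp[where d = "\<lambda>S. CARD('n) + card S"])
    show "finite (Pow B)" using finB by simp
    show "hom_poly m (CARD('n) + card S) (\<lambda>z::'n conf. h S (z i))" if "S \<in> Pow B" "i < m" for S m i
      using hp that by blast
    show "h S (0, 0) = 0" for S by (rule h0)
    show "(\<Sum>S\<in>Pow B. h S p) = 0" if "degenerate p" for p
      unfolding hq q_def using Dfun_deg[OF that] by simp
  qed
  have q0: "q (0, 0) = 0" using Dfun_deg[of "(0,0)::'n pt"] by (simp add: degenerate_def q_def)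
  have qa: "q a \<noteq> 0"
  proof -
    have "\<forall>b\<in>B. coord (\<kappa> b) a + - coord (\<kappa> b) b \<noteq> 0"
    proof
      fix b assume "b \<in> B"
      then have "b \<noteq> a" unfolding B_def by blast
      from \<kappa>[OF this] show "coord (\<kappa> b) a + - coord (\<kappa> b) b \<noteq> 0" by simp
    qed
    then have "(\<Prod>b\<in>B. coord (\<kappa> b) a + - coord (\<kappa> b) b) \<noteq> 0"
      using finB by (simp add: prod_zero_iff)
    then show ?thesis unfolding q_def using Dfun_nondeg[OF nd] by simp
  qed
  have qz: "q p = 0" if "p \<in># Z" "p \<noteq> a" "Z = X \<or> Z = Y" for p Z
  proof (cases "degenerate p")
    case True then show ?thesis by (simp add: q_def Dfun_deg)
  next
    case False
    then have "p \<in> B" using that unfolding B_def X'_def Y'_def by auto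
    then have "(\<Prod>b\<in>B. coord (\<kappa> b) p + - coord (\<kappa> b) b) = 0"
      using finB by (simp add: prod_zero_iff) blast
    then show ?thesis unfolding q_def by simp
  qed
  have hqe: "(\<lambda>p. \<Sum>S\<in>Pow B. h S p) = q" using hq by (rule ext)
  have phiX: "phi X (fsum q) = of_nat (count X a) * q a"
    unfolding phi_fsum[of q, OF q0]
  proof (rule sum_mset_single)
    show "\<forall>p\<in>#X. p \<noteq> a \<longrightarrow> q p = 0" using qz[of _ X] by blast
  qed
  have phiY: "phi Y (fsum q) = of_nat (count Y a) * q a"
    unfolding phi_fsum[of q, OF q0]
  proof (rule sum_mset_single)
    show "\<forall>p\<in>#Y. p \<noteq> a \<longrightarrow> q p = 0" using qz[of _ Y] by blast
  qed
  have "count X a \<noteq> count Y a" using cnt cX cY by simp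
  then have "real (count X a) \<noteq> real (count Y a)" by simp
  then have "phi X (fsum q) \<noteq> phi Y (fsum q)"
    unfolding phiX phiY using qa by simp
  then show ?thesis using fin unfolding hqe by blast
qed

end
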